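(* Let $(X,Z)\in\mathbb{R}^{n}\times\mathbb{R}^{n\times p}$ be any fixed design matrix and consider the linear model $Y=X\beta+Z\theta+\epsilon$, where the noise vector $\epsilon\in\mathbb{R}^n$ is exchangeable. Let $T(\cdot,\cdot;X,Z,\epsilon)$ be a function of a pair of $n\times n$ permutation matrices that satisfies the transferability condition: for all $P_{\pi_i},P_{\pi_j},P_\sigma\in\mathcal{S}_n$, $$T(P_{\pi_i},P_{\pi_j};X,Z,P_\sigma\epsilon)=T(P_\sigma^{-1}P_{\pi_i},P_\sigma^{-1}P_{\pi_j};X,Z,\epsilon).$$ Let $\mathcal{R}=\mathcal{R}(X,Z)\subseteq[n]$ be any row set (possibly depending on the design). Draw $P_{\pi_1\mid\mathcal{R}},\dots,P_{\pi_B\mid\mathcal{R}}$ uniformly at random from $\mathcal{S}_{n\mid\mathcal{R}}$, set $T_{i,0}=T(P_{\pi_i\mid\mathcal{R}},I_n;X,Z,\epsilon)$ and $T_{0,i}=T(I_n,P_{\pi_i\mid\mathcal{R}};X,Z,\epsilon)$, and define $$p_{\text{val}}=\frac{1}{B+1}\Big[1+\sum_{i=1}^B\mathbb{I}(T_{i,0}>T_{0,i})+\tfrac12\mathbb{I}(T_{i,0}=T_{0,i})\Big].$$ Then under the null hypothesis $\mathcal{H}_0:\beta=0$, $pr(p_{\text{val}}\le\alpha\mid\mathcal{H}_0)<2\alpha$ for all $\alpha>0$.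
   Context: $[n]=\{1,\dots,n\}$. $\mathcal{S}_n$ denotes the group of all $n\times n$ permutation matrices; a permutation $\pi$ of $[n]$ corresponds to $P_\pi=(p_{ij})$ with $p_{ij}=1$ iff $\pi(i)=j$. For $\mathcal{R}\subseteq[n]$, $\mathcal{S}_{n\mid\mathcal{R}}$ is the subgroup of permutation matrices $P_{\pi\mid\mathcal{R}}$ with $p_{ii}=1$ for all $i\in\mathcal{R}$ (i.e. permutations fixing every row in $\mathcal{R}$). A noise vector $\epsilon$ is exchangeable if $P\epsilon$ has the same distribution as $\epsilon$ for every $P\in\mathcal{S}_n$. $\mathbb{I}$ is the indicator function. *)

theory Defs
  imports "HOL-Probability.Probability"
begin

definition perm_mat :: "('n::finite \<Rightarrow> 'n) \<Rightarrow> real^'n^'n" where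
  "perm_mat \<pi> = (\<chi> i j. if \<pi> i = j then 1 else 0)"

definition perm_mats :: "(real^'n::finite^'n) set" where
  "perm_mats = {perm_mat \<pi> | \<pi>. \<pi> permutes (UNIV :: 'n set)}"

definition perm_mats_fix :: "'n::finite set \<Rightarrow> (real^'n^'n) set" where
  "perm_mats_fix R = {P \<in> perm_mats. \<forall>i\<in>R. P $ i $ i = 1}"

definition exchangeable :: "'a measure \<Rightarrow> ('a \<Rightarrow> real^'n::finite) \<Rightarrow> bool" where
  "exchangeable M \<epsilon> \<longleftrightarrow>
     (\<forall>P\<in>perm_mats. distr M borel (\<lambda>\<omega>. P *v \<epsilon> \<omega>) = distr M borel \<epsilon>)"

text \<open>The p-value, for a statistic t of a pair of permutation matrices (with the
  data X, Z, eps already plugged in) and drawn matrices Ps 1, ..., Ps B.\<close>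
definition pval :: "(real^'n::finite^'n \<Rightarrow> real^'n^'n \<Rightarrow> real) \<Rightarrow> nat \<Rightarrow> (nat \<Rightarrow> real^'n^'n) \<Rightarrow> real" where
  "pval t B Ps = (1 + (\<Sum>i=1..B. of_bool (t (Ps i) (mat 1) > t (mat 1) (Ps i))
                     + of_bool (t (Ps i) (mat 1) = t (mat 1) (Ps i)) / 2)) / real (B + 1)"

end

theory Submission
  imports Defs
begin

lemma pm_mult: "perm_mat \<sigma> ** perm_mat \<pi> = perm_mat (\<pi> \<circ> \<sigma>)"
  unfolding perm_mat_def matrix_matrix_mult_def
  by (simp add: vec_eq_iff if_distrib[of "\<lambda>x. x * _"] cong: if_cong)

lemma pm_id: "perm_mat id = mat 1"
  unfolding perm_mat_def mat_def by (simp add: vec_eq_iff)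

lemma pm_diag: "perm_mat \<pi> $ i $ i = 1 \<longleftrightarrow> \<pi> i = i"
  unfolding perm_mat_def by simp

lemma pm_inv:
  assumes "\<pi> permutes (UNIV::'n::finite set)"
  shows "matrix_inv (perm_mat \<pi> :: real^'n^'n) = perm_mat (inv \<pi>)"
proof -
  have l: "perm_mat (inv \<pi>) ** perm_mat \<pi> = (mat 1 :: real^'n^'n)"
    using assms by (simp add: pm_mult permutes_inv_o pm_id)
  have r: "perm_mat \<pi> ** perm_mat (inv \<pi>) = (mat 1 :: real^'n^'n)"
    using assms by (simp add: pm_mult permutes_inv_o pm_id)
  define A where "A = matrix_inv (perm_mat \<pi> :: real^'n^'n)"
  have "perm_mat \<pi> ** A = mat 1 \<and> A ** perm_mat \<pi> = mat 1"
    unfolding A_def matrix_inv_def by (rule someI[of _ "perm_mat (inv \<pi>)"]) (use l r in auto)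
  then have "A = A ** (perm_mat \<pi> ** perm_mat (inv \<pi>))" using r by (simp add: matrix_mul_rid)
  also have "\<dots> = perm_mat (inv \<pi>)"
    using \<open>perm_mat \<pi> ** A = mat 1 \<and> A ** perm_mat \<pi> = mat 1\<close>
    by (simp add: matrix_mul_assoc matrix_mul_lid)
  finally show ?thesis unfolding A_def .
qed

lemma G_sub: "perm_mats_fix R \<subseteq> perm_mats"
  unfolding perm_mats_fix_def by auto

lemma G_elim:
  assumes "P \<in> perm_mats_fix R"
  obtains \<pi> where "\<pi> permutes UNIV" "P = perm_mat \<pi>" "\<forall>i\<in>R. \<pi> i = i"
  using assms unfolding perm_mats_fix_def perm_mats_def by (auto simp: pm_diag)

lemma G_intro:
  "\<pi> permutes UNIV \<Longrightarrow> \<forall>i\<in>R. \<pi> i = i \<Longrightarrow> perm_mat \<pi> \<in> perm_mats_fix R"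
  unfolding perm_mats_fix_def perm_mats_def by (auto simp: pm_diag)

lemma G_one: "mat 1 \<in> perm_mats_fix R"
  using G_intro[of id R] by (simp add: pm_id permutes_id)

lemma G_mult:
  assumes "P \<in> perm_mats_fix R" "Q \<in> perm_mats_fix R"
  shows "P ** Q \<in> perm_mats_fix R"
proof -
  obtain \<pi> where 1: "\<pi> permutes UNIV" "P = perm_mat \<pi>" "\<forall>i\<in>R. \<pi> i = i" using assms(1) by (rule G_elim)
  obtain \<sigma> where 2: "\<sigma> permutes UNIV" "Q = perm_mat \<sigma>" "\<forall>i\<in>R. \<sigma> i = i" using assms(2) by (rule G_elim)
  show ?thesis using 1 2 by (auto simp: pm_mult intro!: G_intro permutes_compose)
qed

lemma G_inv:
  assumes "P \<in> perm_mats_fix R"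
  shows "matrix_inv P \<in> perm_mats_fix R"
proof -
  obtain \<pi> where 1: "\<pi> permutes UNIV" "P = perm_mat \<pi>" "\<forall>i\<in>R. \<pi> i = i" using assms(1) by (rule G_elim)
  have "\<forall>i\<in>R. inv \<pi> i = i" using 1 by (metis permutes_inverses(2))
  then show ?thesis using 1 by (auto simp: pm_inv intro!: G_intro permutes_inv)
qed

lemma pm_inv_l:
  assumes "P \<in> perm_mats"
  shows "matrix_inv P ** P = mat 1" "P ** matrix_inv P = mat 1"
    "matrix_inv (matrix_inv P) = P"
proof -
  obtain \<pi> where 1: "\<pi> permutes UNIV" "P = perm_mat \<pi>" using assms unfolding perm_mats_def by auto
  show "matrix_inv P ** P = mat 1" "P ** matrix_inv P = mat 1"
    using 1 by (simp_all add: pm_inv pm_mult permutes_inv_o pm_id)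
  show "matrix_inv (matrix_inv P) = P"
    using 1 by (simp add: pm_inv permutes_inv inv_inv_eq permutes_bij)
qed

lemma G_finite: "finite (perm_mats_fix R :: (real^'n::finite^'n) set)"
proof -
  have "finite {\<pi>. \<pi> permutes (UNIV::'n set)}" by (rule finite_permutations) simp
  then have "finite (perm_mat ` {\<pi>. \<pi> permutes (UNIV::'n set)} :: (real^'n^'n) set)"
    by (rule finite_imageI)
  moreover have "(perm_mats :: (real^'n::finite^'n) set) \<subseteq> perm_mat ` {\<pi>. \<pi> permutes (UNIV::'n set)}"
    unfolding perm_mats_def by auto
  ultimately have "finite (perm_mats :: (real^'n::finite^'n) set)" by (rule finite_subset[rotated])
  then show ?thesis using G_sub finite_subset by blast
qed

lemma tournament:
  fixes a :: "nat \<Rightarrow> nat \<Rightarrow> real" and I :: "nat set" and \<alpha> :: real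
  assumes fin: "finite I" and nn: "\<And>i k. a i k \<ge> 0" and sym: "\<And>i k. i \<noteq> k \<Longrightarrow> a i k + a k i = 1"
  shows "real (card {k\<in>I. 1 + (\<Sum>i\<in>I-{k}. a i k) \<le> \<alpha> * card I}) \<le> max 0 (2*\<alpha>*card I - 1)"
proof -
  define K where "K = {k\<in>I. 1 + (\<Sum>i\<in>I-{k}. a i k) \<le> \<alpha> * card I}"
  define m where "m = card K"
  have KI: "K \<subseteq> I" and finK: "finite K" using fin unfolding K_def by auto
  define D where "D = (\<Sum>k\<in>K. \<Sum>i\<in>K. if i \<noteq> k then a i k else 0)"
  define D' where "D' = (\<Sum>k\<in>K. \<Sum>i\<in>K. if i \<noteq> k then a k i else 0)"
  have "D' = D" unfolding D_def D'_def by (subst sum.swap) (intro sum.cong refl, auto)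
  have "D + D' = (\<Sum>k\<in>K. \<Sum>i\<in>K. if i \<noteq> k then 1 else 0)"
    unfolding D_def D'_def sum.distrib[symmetric]
    by (intro sum.cong refl) (auto simp: sym)
  also have "\<dots> = (\<Sum>k\<in>K. real m - 1)"
  proof (intro sum.cong refl)
    fix k assume "k \<in> K"
    have "(\<Sum>i\<in>K. if i \<noteq> k then 1 else 0 :: real) = (\<Sum>i\<in>K-{k}. 1)"
      using finK by (intro sum.mono_neutral_cong_right) auto
    also have "\<dots> = real (card K - 1)" using \<open>k \<in> K\<close> finK by simp
    also have "\<dots> = real m - 1" using \<open>k \<in> K\<close> finK
      unfolding m_def by (subst of_nat_diff) (auto simp: Suc_le_eq card_gt_0_iff)
    finally show "(\<Sum>i\<in>K. if i \<noteq> k then 1 else 0 :: real) = real m - 1" .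
  qed
  finally have D2: "2 * D = real m * (real m - 1)" using \<open>D' = D\<close> by (simp add: m_def)
  have "D \<le> (\<Sum>k\<in>K. \<Sum>i\<in>I-{k}. a i k)"
    unfolding D_def
  proof (intro sum_mono)
    fix k assume "k \<in> K"
    have "(\<Sum>i\<in>K. if i \<noteq> k then a i k else 0) = (\<Sum>i\<in>K-{k}. a i k)"
      using finK by (intro sum.mono_neutral_cong_right) auto
    also have "\<dots> \<le> (\<Sum>i\<in>I-{k}. a i k)"
      using fin KI nn by (intro sum_mono2) auto
    finally show "(\<Sum>i\<in>K. if i \<noteq> k then a i k else 0) \<le> (\<Sum>i\<in>I-{k}. a i k)" .
  qed
  also have "\<dots> \<le> (\<Sum>k\<in>K. \<alpha> * card I - 1)"
    by (intro sum_mono) (auto simp: K_def)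
  also have "\<dots> = real m * (\<alpha> * card I - 1)" by (simp add: m_def)
  finally have "real m * (real m - 1) \<le> 2 * (real m * (\<alpha> * card I - 1))" using D2 by linarith
  then have "m = 0 \<or> real m - 1 \<le> 2 * (\<alpha> * card I - 1)"
  proof (cases "m = 0")
    case False
    assume *: "real m * (real m - 1) \<le> 2 * (real m * (\<alpha> * card I - 1))"
    have "real m > 0" using False by simp
    moreover have "real m * (real m - 1) \<le> real m * (2 * (\<alpha> * card I - 1))"
      using * by (simp add: algebra_simps)
    ultimately show ?thesis by (simp add: mult_le_cancel_left_pos)
  qed simp
  then have "real m \<le> max 0 (2*\<alpha>*card I - 1)" by auto
  then show ?thesis unfolding m_def K_def .
qed

definition wt :: "real \<Rightarrow> real \<Rightarrow> real" where
  "wt a b = of_bool (a > b) + of_bool (a = b) / 2"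

lemma wt_nn: "wt a b \<ge> 0" unfolding wt_def by simp
lemma wt_sym: "wt a b + wt b a = 1" unfolding wt_def by auto

definition sc :: "('m \<Rightarrow> 'm \<Rightarrow> real) \<Rightarrow> nat \<Rightarrow> (nat \<Rightarrow> 'm) \<Rightarrow> nat \<Rightarrow> real" where
  "sc t B q k = (\<Sum>i\<in>{0..B}-{k}. wt (t (q i) (q k)) (t (q k) (q i)))"

lemma sc_swap:
  assumes "k \<in> {0..B}"
  shows "sc t B (q \<circ> Transposition.transpose 0 k) k = sc t B q 0"
proof -
  let ?\<tau> = "Transposition.transpose 0 k"
  have bij: "bij_betw ?\<tau> ({0..B}-{k}) ({0..B}-{0})"
  proof (rule bij_betw_byWitness[where f'="?\<tau>"])
    show "\<forall>a\<in>{0..B} - {k}. ?\<tau> (?\<tau> a) = a" by simp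
    show "\<forall>a\<in>{0..B} - {0}. ?\<tau> (?\<tau> a) = a" by simp
    show "?\<tau> ` ({0..B} - {k}) \<subseteq> {0..B} - {0}"
    proof
      fix x assume "x \<in> ?\<tau> ` ({0..B} - {k})"
      then obtain i where "i \<in> {0..B} - {k}" "x = ?\<tau> i" by blast
      then have i: "i \<in> {0..B}" "i \<noteq> k" "x = ?\<tau> i" by auto
      show "x \<in> {0..B} - {0}"
        using i assms by (cases "i = 0") (simp_all add: Transposition.transpose_def)
    qed
    show "?\<tau> ` ({0..B} - {0}) \<subseteq> {0..B} - {k}"
    proof
      fix x assume "x \<in> ?\<tau> ` ({0..B} - {0})"
      then obtain i where "i \<in> {0..B} - {0}" "x = ?\<tau> i" by blast
      then have i: "i \<in> {0..B}" "i \<noteq> 0" "x = ?\<tau> i" by auto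
      show "x \<in> {0..B} - {k}"
        using i assms by (cases "i = k") (simp_all add: Transposition.transpose_def)
    qed
  qed
  have "sc t B (q \<circ> ?\<tau>) k = (\<Sum>i\<in>{0..B}-{k}. (\<lambda>j. wt (t (q j) (q 0)) (t (q 0) (q j))) (?\<tau> i))"
    unfolding sc_def by simp
  also have "\<dots> = sc t B q 0" unfolding sc_def by (rule sum.reindex_bij_betw[OF bij])
  finally show ?thesis .
qed

lemma count_swap:
  assumes "k \<in> {0..B}"
  shows "card {q \<in> PiE {0..B} (\<lambda>_. G). 1 + sc t B q k \<le> c} = card {q \<in> PiE {0..B} (\<lambda>_. G). 1 + sc t B q 0 \<le> c}"
proof -
  let ?\<tau> = "Transposition.transpose 0 k"
  have inv: "q \<circ> ?\<tau> \<circ> ?\<tau> = q" for q :: "nat \<Rightarrow> 'a" by (simp add: comp_assoc)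
  have t1: "?\<tau> i \<in> {0..B}" if "i \<in> {0..B}" for i
    using that assms by (simp add: Transposition.transpose_def)
  have t2: "?\<tau> i = i" if "i \<notin> {0..B}" for i
    using that assms by (auto simp add: Transposition.transpose_def)
  have mem: "q \<circ> ?\<tau> \<in> PiE {0..B} (\<lambda>_. G)" if q: "q \<in> PiE {0..B} (\<lambda>_. G)" for q
    unfolding PiE_iff extensional_def
  proof safe
    fix i assume "i \<in> {0..B}"
    then show "(q \<circ> ?\<tau>) i \<in> G" using q t1 by (auto simp: PiE_iff)
  next
    fix i assume "i \<notin> {0..B}"
    then show "(q \<circ> ?\<tau>) i = undefined" using q t2 by (auto simp: PiE_iff extensional_def)
  qed
  have "bij_betw (\<lambda>q. q \<circ> ?\<tau>) {q \<in> PiE {0..B} (\<lambda>_. G). 1 + sc t B q 0 \<le> c} {q \<in> PiE {0..B} (\<lambda>_. G). 1 + sc t B q k \<le> c}"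
  proof (rule bij_betw_byWitness[where f'="\<lambda>q. q \<circ> ?\<tau>"])
    show "\<forall>a\<in>{q \<in> PiE {0..B} (\<lambda>_. G). 1 + sc t B q 0 \<le> c}. a \<circ> ?\<tau> \<circ> ?\<tau> = a" using inv by auto
    show "\<forall>a\<in>{q \<in> PiE {0..B} (\<lambda>_. G). 1 + sc t B q k \<le> c}. a \<circ> ?\<tau> \<circ> ?\<tau> = a" using inv by auto
    show "(\<lambda>q. q \<circ> ?\<tau>) ` {q \<in> PiE {0..B} (\<lambda>_. G). 1 + sc t B q 0 \<le> c} \<subseteq> {q \<in> PiE {0..B} (\<lambda>_. G). 1 + sc t B q k \<le> c}"
    proof clarify
      fix q assume q: "q \<in> PiE {0..B} (\<lambda>_. G)" "1 + sc t B q 0 \<le> c"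
      show "q \<circ> ?\<tau> \<in> PiE {0..B} (\<lambda>_. G) \<and> 1 + sc t B (q \<circ> ?\<tau>) k \<le> c"
        using mem[OF q(1)] sc_swap[OF assms, of t q] q(2) by simp
    qed
    show "(\<lambda>q. q \<circ> ?\<tau>) ` {q \<in> PiE {0..B} (\<lambda>_. G). 1 + sc t B q k \<le> c} \<subseteq> {q \<in> PiE {0..B} (\<lambda>_. G). 1 + sc t B q 0 \<le> c}"
    proof clarify
      fix q assume q: "q \<in> PiE {0..B} (\<lambda>_. G)" "1 + sc t B q k \<le> c"
      have "sc t B (q \<circ> ?\<tau>) 0 = sc t B (q \<circ> ?\<tau> \<circ> ?\<tau>) k" using sc_swap[OF assms, of t "q \<circ> ?\<tau>"] by simp
      then show "q \<circ> ?\<tau> \<in> PiE {0..B} (\<lambda>_. G) \<and> 1 + sc t B (q \<circ> ?\<tau>) 0 \<le> c"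
        using q mem inv by simp
    qed
  qed
  then show ?thesis by (simp add: bij_betw_same_card)
qed

lemma count_bound:
  fixes \<alpha> :: real
  assumes "finite G"
  shows "real (B+1) * card {q \<in> PiE {0..B} (\<lambda>_. G). 1 + sc t B q 0 \<le> \<alpha> * (B+1)}
          \<le> real (card (PiE {0..B} (\<lambda>_. G))) * max 0 (2*\<alpha>*(B+1) - 1)"
proof -
  let ?P = "PiE {0..B} (\<lambda>_. G)"
  have finP: "finite ?P" using assms by (simp add: finite_PiE)
  have CI: "\<And>A P. {x\<in>A. P x} = A \<inter> {x. P x}" by auto
  have "real (B+1) * card {q \<in> ?P. 1 + sc t B q 0 \<le> \<alpha> * (B+1)}
      = (\<Sum>k\<in>{0..B}. real (card {q \<in> ?P. 1 + sc t B q k \<le> \<alpha> * (B+1)}))"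
  proof -
    have "(\<Sum>k\<in>{0..B}. real (card {q \<in> ?P. 1 + sc t B q k \<le> \<alpha> * (B+1)}))
        = (\<Sum>k\<in>{0..B}. real (card {q \<in> ?P. 1 + sc t B q 0 \<le> \<alpha> * (B+1)}))"
      by (intro sum.cong refl arg_cong[where f=real] count_swap) simp
    then show ?thesis by simp
  qed
  also have "\<dots> = (\<Sum>k\<in>{0..B}. \<Sum>q\<in>?P. of_bool (1 + sc t B q k \<le> \<alpha> * (B+1)))"
    using finP by (simp add: Collect_conj_eq Int_commute)
  also have "\<dots> = (\<Sum>q\<in>?P. \<Sum>k\<in>{0..B}. of_bool (1 + sc t B q k \<le> \<alpha> * (B+1)))"
    by (rule sum.swap)
  also have "\<dots> = (\<Sum>q\<in>?P. real (card {k \<in> {0..B}. 1 + sc t B q k \<le> \<alpha> * (B+1)}))"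
    by (intro sum.cong refl, subst CI, rule sum_of_bool_eq) simp_all
  also have "\<dots> \<le> (\<Sum>q\<in>?P. max 0 (2*\<alpha>*(B+1) - 1))"
  proof (rule sum_mono)
    fix q
    have "real (card {k\<in>{0..B}. 1 + (\<Sum>i\<in>{0..B}-{k}. (\<lambda>i k. wt (t (q i) (q k)) (t (q k) (q i))) i k) \<le> \<alpha> * card {0..B}})
       \<le> max 0 (2*\<alpha>*card {0..B} - 1)"
      by (rule tournament) (auto simp: wt_nn wt_sym)
    then show "real (card {k \<in> {0..B}. 1 + sc t B q k \<le> \<alpha> * (B+1)}) \<le> max 0 (2*\<alpha>*(B+1) - 1)"
      by (simp add: sc_def)
  qed
  also have "\<dots> = real (card ?P) * max 0 (2*\<alpha>*(B+1) - 1)" by simp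
  finally show ?thesis .
qed

definition hmap :: "nat \<Rightarrow> real^'n::finite^'n \<Rightarrow> (nat \<Rightarrow> real^'n^'n) \<Rightarrow> nat \<Rightarrow> real^'n^'n" where
  "hmap B Q ps = (\<lambda>i. if i = 0 then matrix_inv Q else if i \<in> {1..B} then matrix_inv Q ** ps i else undefined)"

lemma pval_le_iff:
  fixes t :: "real^'n::finite^'n \<Rightarrow> real^'n^'n \<Rightarrow> real"
  assumes Q: "Q \<in> perm_mats_fix R" and ps: "ps \<in> PiE {1..B} (\<lambda>_. perm_mats_fix R)"
    and tr: "\<And>A C. A \<in> perm_mats_fix R \<Longrightarrow> C \<in> perm_mats_fix R \<Longrightarrow> tQ A C = t (matrix_inv Q ** A) (matrix_inv Q ** C)"
  shows "pval tQ B ps \<le> \<alpha> \<longleftrightarrow> 1 + sc t B (hmap B Q ps) 0 \<le> \<alpha> * (B+1)"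
proof -
  have e: "{0..B} - {0} = {1..B}" by auto
  have "(\<Sum>i=1..B. of_bool (tQ (ps i) (mat 1) > tQ (mat 1) (ps i)) + of_bool (tQ (ps i) (mat 1) = tQ (mat 1) (ps i)) / 2)
      = sc t B (hmap B Q ps) 0"
    unfolding sc_def e
  proof (intro sum.cong refl)
    fix i assume i: "i \<in> {1..B}"
    then have "ps i \<in> perm_mats_fix R" using ps by auto
    then show "of_bool (tQ (ps i) (mat 1) > tQ (mat 1) (ps i)) + of_bool (tQ (ps i) (mat 1) = tQ (mat 1) (ps i)) / 2
        = wt (t (hmap B Q ps i) (hmap B Q ps 0)) (t (hmap B Q ps 0) (hmap B Q ps i))"
      using i by (simp add: tr G_one hmap_def wt_def matrix_mul_rid)
  qed
  then have "pval tQ B ps = (1 + sc t B (hmap B Q ps) 0) / real (B+1)"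
    unfolding pval_def by simp
  then show ?thesis by (simp add: divide_le_eq algebra_simps)
qed

lemma reparam:
  fixes t :: "real^'n::finite^'n \<Rightarrow> real^'n^'n \<Rightarrow> real"
    and tQ :: "real^'n^'n \<Rightarrow> real^'n^'n \<Rightarrow> real^'n^'n \<Rightarrow> real"
  assumes tr: "\<And>Q A C. Q \<in> perm_mats_fix R \<Longrightarrow> A \<in> perm_mats_fix R \<Longrightarrow> C \<in> perm_mats_fix R \<Longrightarrow> tQ Q A C = t (matrix_inv Q ** A) (matrix_inv Q ** C)"
  shows "(\<Sum>Q\<in>perm_mats_fix R. card {ps \<in> PiE {1..B} (\<lambda>_. perm_mats_fix R). pval (tQ Q) B ps \<le> \<alpha>})
       = card {q \<in> PiE {0..B} (\<lambda>_. perm_mats_fix R). 1 + sc t B q 0 \<le> \<alpha> * (B+1)}"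
proof -
  let ?G = "perm_mats_fix R :: (real^'n^'n) set"
  let ?A = "\<lambda>Q. {ps \<in> PiE {1..B} (\<lambda>_. ?G). pval (tQ Q) B ps \<le> \<alpha>}"
  let ?T = "{q \<in> PiE {0..B} (\<lambda>_. ?G). 1 + sc t B q 0 \<le> \<alpha> * (B+1)}"
  have finG: "finite ?G" by (rule G_finite)
  have "(\<Sum>Q\<in>?G. card (?A Q)) = card (Sigma ?G ?A)"
    using finG by (intro card_SigmaI[symmetric]) (auto intro: finite_subset[OF _ finite_PiE[OF _ finG]])
  also have "\<dots> = card ?T"
  proof (rule bij_betw_same_card[where f="\<lambda>(Q, ps). hmap B Q ps"])
    define g where "g = (\<lambda>q :: nat \<Rightarrow> real^'n^'n. (matrix_inv (q 0), \<lambda>i. if i \<in> {1..B} then matrix_inv (q 0) ** q i else undefined))"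
    show "bij_betw (\<lambda>(Q, ps). hmap B Q ps) (Sigma ?G ?A) ?T"
    proof (rule bij_betw_byWitness[where f'=g])
      show "\<forall>a\<in>Sigma ?G ?A. g (case a of (Q, ps) \<Rightarrow> hmap B Q ps) = a"
      proof clarify
        fix Q ps assume Q: "Q \<in> ?G" and ps: "ps \<in> PiE {1..B} (\<lambda>_. ?G)" "pval (tQ Q) B ps \<le> \<alpha>"
        have QP: "Q \<in> perm_mats" "matrix_inv Q \<in> perm_mats" using Q G_sub G_inv by blast+
        have 1: "snd (g (hmap B Q ps)) = ps"
        proof
          fix i show "snd (g (hmap B Q ps)) i = ps i"
            using ps QP by (auto simp: g_def hmap_def matrix_mul_assoc pm_inv_l matrix_mul_lid PiE_iff extensional_def)
        qed
        have 2: "fst (g (hmap B Q ps)) = Q"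
          using QP by (simp add: g_def hmap_def pm_inv_l)
        show "g (hmap B Q ps) = (Q, ps)" using 1 2 by (simp add: prod_eq_iff)
      qed
      show "\<forall>a\<in>?T. (case g a of (Q, ps) \<Rightarrow> hmap B Q ps) = a"
      proof clarify
        fix q assume q: "q \<in> PiE {0..B} (\<lambda>_. ?G)"
        have q0: "q 0 \<in> ?G" using q by auto
        have QP: "q 0 \<in> perm_mats" "matrix_inv (q 0) \<in> perm_mats" using q0 G_sub G_inv by blast+
        show "(case g q of (Q, ps) \<Rightarrow> hmap B Q ps) = q"
        proof
          fix i show "(case g q of (Q, ps) \<Rightarrow> hmap B Q ps) i = q i"
            using q QP by (auto simp: g_def hmap_def matrix_mul_assoc pm_inv_l matrix_mul_lid PiE_iff extensional_def)
        qed
      qed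
      show "(\<lambda>(Q, ps). hmap B Q ps) ` Sigma ?G ?A \<subseteq> ?T"
      proof clarify
        fix Q ps assume Q: "Q \<in> ?G" and ps: "ps \<in> PiE {1..B} (\<lambda>_. ?G)" "pval (tQ Q) B ps \<le> \<alpha>"
        have "hmap B Q ps \<in> PiE {0..B} (\<lambda>_. ?G)"
          using Q ps(1) by (auto simp: hmap_def PiE_iff extensional_def G_inv G_mult)
        moreover have "1 + sc t B (hmap B Q ps) 0 \<le> \<alpha> * (B+1)"
          using pval_le_iff[OF Q ps(1), of "tQ Q" t] tr[OF Q] ps(2) by blast
        ultimately show "hmap B Q ps \<in> PiE {0..B} (\<lambda>_. ?G) \<and> 1 + sc t B (hmap B Q ps) 0 \<le> \<alpha> * (B+1)" by blast
      qed
      show "g ` ?T \<subseteq> Sigma ?G ?A"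
      proof
        fix x assume "x \<in> g ` ?T"
        then obtain q where q: "q \<in> PiE {0..B} (\<lambda>_. ?G)" and c: "1 + sc t B q 0 \<le> \<alpha> * (B+1)"
          and x: "x = g q" by blast
        have q0: "q 0 \<in> ?G" using q by auto
        have QP: "q 0 \<in> perm_mats" "matrix_inv (q 0) \<in> perm_mats" using q0 G_sub G_inv by blast+
        obtain Q ps where gq: "g q = (Q, ps)" by fastforce
        have Q: "Q \<in> ?G" using gq q0 by (auto simp: g_def G_inv)
        have ps: "ps \<in> PiE {1..B} (\<lambda>_. ?G)" using gq q q0
          by (auto simp: g_def PiE_iff extensional_def G_inv G_mult)
        have "hmap B Q ps = q"
          using \<open>\<forall>a\<in>?T. (case g a of (Q, ps) \<Rightarrow> hmap B Q ps) = a\<close> q c gq by auto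
        then have "pval (tQ Q) B ps \<le> \<alpha>"
          using pval_le_iff[OF Q ps, of "tQ Q" t] tr[OF Q] c by simp
        then show "x \<in> Sigma ?G ?A" using gq Q ps x by simp
      qed
    qed
  qed
  finally show ?thesis .
qed

lemma emeasure_nu:
  fixes G :: "'b set" and I :: "'i set"
  assumes finG: "finite G" and neG: "G \<noteq> {}" and finI: "finite I" and A: "A \<subseteq> PiE I (\<lambda>_. G)"
  shows "emeasure (PiM I (\<lambda>i. uniform_count_measure G)) A = ennreal (real (card A) / real (card G) ^ card I)"
proof -
  interpret p: prob_space "uniform_count_measure G" by (rule prob_space_uniform_count_measure) fact+
  interpret ps: product_sigma_finite "\<lambda>i. uniform_count_measure G"
    by (simp add: product_sigma_finite_def p.sigma_finite_measure_axioms)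
  have N: "real (card G) > 0" using finG neG by (simp add: card_gt_0_iff)
  have inv1: "(1 / of_nat (card G) :: ennreal) = ennreal (1 / real (card G))"
    unfolding ennreal_of_nat_eq_real_of_nat using divide_ennreal[of 1 "real (card G)"] N by simp
  have finA: "finite A" using A finite_subset finite_PiE[OF finI finG] by blast
  have single: "{x} = PiE I (\<lambda>i. {x i})" if "x \<in> A" for x
    using that A by (intro PiE_singleton[symmetric]) (auto simp: PiE_iff)
  have sets: "{x} \<in> sets (PiM I (\<lambda>i. uniform_count_measure G))" if "x \<in> A" for x
    unfolding single[OF that]
    using that A finI by (intro sets_PiM_I_finite) (auto simp: sets_uniform_count_measure PiE_iff)
  have em1: "emeasure (PiM I (\<lambda>i. uniform_count_measure G)) {x} = ennreal ((1 / real (card G)) ^ card I)" if "x \<in> A" for x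
  proof -
    have "emeasure (PiM I (\<lambda>i. uniform_count_measure G)) {x} = (\<Prod>i\<in>I. emeasure (uniform_count_measure G) {x i})"
      unfolding single[OF that]
      using that A finI by (intro ps.emeasure_PiM) (auto simp: sets_uniform_count_measure PiE_iff)
    also have "\<dots> = (\<Prod>i\<in>I. ennreal (1 / real (card G)))"
    proof (intro prod.cong refl)
      fix i assume "i \<in> I"
      then have "x i \<in> G" using that A by (auto simp: PiE_iff)
      then show "emeasure (uniform_count_measure G) {x i} = ennreal (1 / real (card G))"
        using finG by (subst emeasure_uniform_count_measure) (auto simp: inv1)
    qed
    also have "\<dots> = ennreal ((1 / real (card G)) ^ card I)"
      by (simp add: prod_ennreal ennreal_power)
    finally show ?thesis .
  qed
  have "emeasure (PiM I (\<lambda>i. uniform_count_measure G)) A = (\<Sum>x\<in>A. emeasure (PiM I (\<lambda>i. uniform_count_measure G)) {x})"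
    by (rule emeasure_eq_sum_singleton[OF finA sets])
  also have "\<dots> = (\<Sum>x\<in>A. ennreal ((1 / real (card G)) ^ card I))"
    by (intro sum.cong refl em1)
  also have "\<dots> = ennreal (real (card A) * (1 / real (card G)) ^ card I)"
    by (simp add: ennreal_mult ennreal_of_nat_eq_real_of_nat)
  also have "\<dots> = ennreal (real (card A) / real (card G) ^ card I)"
    by (simp add: power_one_over)
  finally show ?thesis .
qed

theorem theorem1:
  fixes M :: "'a measure"
    and \<epsilon> :: "'a \<Rightarrow> real^'n::finite"
    and X :: "real^'n" and Z :: "real^'p::finite^'n"
    and \<beta> :: real and \<theta> :: "real^'p"
    and Y :: "'a \<Rightarrow> real^'n"
    and T :: "real^'n^'n \<Rightarrow> real^'n^'n \<Rightarrow> real^'n \<Rightarrow> real^'p^'n \<Rightarrow> real^'n \<Rightarrow> real"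
    and R :: "'n set" and B :: nat and \<alpha> :: real
  assumes "prob_space M"
    and "\<epsilon> \<in> borel_measurable M"
    and "exchangeable M \<epsilon>"
    and "\<forall>\<omega>. Y \<omega> = \<beta> *\<^sub>R X + Z *v \<theta> + \<epsilon> \<omega>"
    and "\<beta> = 0"
    and "\<forall>P Q. (\<lambda>e. T P Q X Z e) \<in> borel_measurable borel"
    and "\<forall>Pi\<in>perm_mats. \<forall>Pj\<in>perm_mats. \<forall>Ps\<in>perm_mats. \<forall>e.
           T Pi Pj X Z (Ps *v e) = T (matrix_inv Ps ** Pi) (matrix_inv Ps ** Pj) X Z e"
    and "\<alpha> > 0"
  shows "measure (distr M borel \<epsilon> \<Otimes>\<^sub>M (\<Pi>\<^sub>M i\<in>{1..B}. uniform_count_measure (perm_mats_fix R)))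
           {z \<in> space (distr M borel \<epsilon> \<Otimes>\<^sub>M (\<Pi>\<^sub>M i\<in>{1..B}. uniform_count_measure (perm_mats_fix R))).
              pval (\<lambda>P Q. T P Q X Z (fst z)) B (snd z) \<le> \<alpha>} < 2 * \<alpha>"
proof -
  let ?G = "perm_mats_fix R :: (real^'n^'n) set"
  let ?\<nu> = "\<Pi>\<^sub>M i\<in>{1..B}. uniform_count_measure ?G"
  let ?\<mu> = "distr M borel \<epsilon>"
  let ?S = "{z \<in> space (?\<mu> \<Otimes>\<^sub>M ?\<nu>). pval (\<lambda>P Q. T P Q X Z (fst z)) B (snd z) \<le> \<alpha>}"
  let ?N = "card ?G"
  interpret M: prob_space M by fact
  interpret \<mu>: prob_space ?\<mu> by (rule M.prob_space_distr) fact
  have finG: "finite ?G" by (rule G_finite)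
  have neG: "?G \<noteq> {}" using G_one by blast
  have Npos: "real ?N > 0" using finG neG by (simp add: card_gt_0_iff)
  interpret \<nu>: prob_space ?\<nu>
    by (rule prob_space_PiM) (rule prob_space_uniform_count_measure[OF finG neG])
  interpret P: pair_prob_space ?\<mu> ?\<nu> ..
  define c where "c = max 0 (2*\<alpha>*(B+1) - 1) / (B+1)"
  have c0: "c \<ge> 0" unfolding c_def by simp
  have c_lt: "c < 2 * \<alpha>"
  proof -
    have "max 0 (2*\<alpha>*(B+1) - 1) < 2 * \<alpha> * (B+1)" using assms(8) by (simp add: add_pos_pos)
    then show ?thesis unfolding c_def by (simp add: divide_less_eq algebra_simps)
  qed
  show ?thesis
  proof (cases "?S \<in> sets (?\<mu> \<Otimes>\<^sub>M ?\<nu>)")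
    case False
    then show ?thesis using assms(8) by (simp add: measure_notin_sets)
  next
    case True
    define f where "f e = emeasure ?\<nu> (Pair e -` ?S)" for e
    have em: "emeasure (?\<mu> \<Otimes>\<^sub>M ?\<nu>) ?S = (\<integral>\<^sup>+e. f e \<partial>?\<mu>)"
      unfolding f_def by (rule \<nu>.emeasure_pair_measure_alt[OF True])
    have fmeas: "f \<in> borel_measurable ?\<mu>"
      unfolding f_def by (rule \<nu>.measurable_emeasure_Pair[OF True])
    then have fmeas': "f \<in> borel_measurable borel" by simp
    define cnt where "cnt e = card {ps \<in> PiE {1..B} (\<lambda>_. ?G). pval (\<lambda>P Q. T P Q X Z e) B ps \<le> \<alpha>}" for e
    have fval: "f e = ennreal (real (cnt e) / real ?N ^ B)" for e
    proof -
      have "Pair e -` ?S = {ps \<in> PiE {1..B} (\<lambda>_. ?G). pval (\<lambda>P Q. T P Q X Z e) B ps \<le> \<alpha>}"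
        by (auto simp: space_pair_measure space_PiM space_uniform_count_measure)
      then show ?thesis unfolding f_def cnt_def
        by (subst emeasure_nu) (use finG neG in auto)
    qed
    have vmeas: "(\<lambda>e. Q *v e) \<in> borel_measurable borel" for Q :: "real^'n^'n"
      by (rule borel_measurable_continuous_onI) (rule matrix_vector_mult_linear_continuous_on)
    have inv: "integral\<^sup>N ?\<mu> f = (\<integral>\<^sup>+e. f (Q *v e) \<partial>?\<mu>)" if Q: "Q \<in> ?G" for Q
    proof -
      have "distr ?\<mu> borel (\<lambda>e. Q *v e) = distr M borel ((\<lambda>e. Q *v e) \<circ> \<epsilon>)"
        by (rule distr_distr[OF vmeas assms(2)])
      also have "\<dots> = ?\<mu>"
      proof -
        have "Q \<in> perm_mats" using Q G_sub by auto
        then show ?thesis using assms(3) unfolding exchangeable_def comp_def by simp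
      qed
      finally have d: "distr ?\<mu> borel (\<lambda>e. Q *v e) = ?\<mu>" .
      have "(\<integral>\<^sup>+e. f (Q *v e) \<partial>?\<mu>) = integral\<^sup>N (distr ?\<mu> borel (\<lambda>e. Q *v e)) f"
        by (rule nn_integral_distr[symmetric]) (use vmeas fmeas' in simp_all)
      then show ?thesis using d by simp
    qed
    have bound: "(\<Sum>Q\<in>?G. f (Q *v e)) * ennreal (1 / real ?N) \<le> ennreal c" for e
    proof -
      let ?t = "\<lambda>A C. T A C X Z e"
      have tr: "\<And>Q A C. Q \<in> ?G \<Longrightarrow> A \<in> ?G \<Longrightarrow> C \<in> ?G \<Longrightarrow>
          (\<lambda>Q A C. T A C X Z (Q *v e)) Q A C = ?t (matrix_inv Q ** A) (matrix_inv Q ** C)"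
      proof -
        fix Q A C assume "Q \<in> ?G" "A \<in> ?G" "C \<in> ?G"
        then have "Q \<in> perm_mats" "A \<in> perm_mats" "C \<in> perm_mats" using G_sub by auto
        then show "(\<lambda>Q A C. T A C X Z (Q *v e)) Q A C = ?t (matrix_inv Q ** A) (matrix_inv Q ** C)"
          using assms(7) by simp
      qed
      have h1: "(\<Sum>Q\<in>?G. cnt (Q *v e)) = card {q \<in> PiE {0..B} (\<lambda>_. ?G). 1 + sc ?t B q 0 \<le> \<alpha> * (B+1)}"
        unfolding cnt_def using reparam[of R "\<lambda>Q A C. T A C X Z (Q *v e)" ?t B \<alpha>, OF tr] by simp
      have h2: "real (B+1) * card {q \<in> PiE {0..B} (\<lambda>_. ?G). 1 + sc ?t B q 0 \<le> \<alpha> * (B+1)}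
          \<le> real (card (PiE {0..B} (\<lambda>_. ?G))) * max 0 (2*\<alpha>*(B+1) - 1)"
        by (rule count_bound[OF finG])
      have h3: "card (PiE {0..B} (\<lambda>_. ?G)) = ?N ^ (B+1)"
        by (simp add: card_PiE)
      have h4: "(\<Sum>Q\<in>?G. real (cnt (Q *v e))) = real (card {q \<in> PiE {0..B} (\<lambda>_. ?G). 1 + sc ?t B q 0 \<le> \<alpha> * (B+1)})"
        unfolding h1[symmetric] by simp
      have "real (B+1) * (\<Sum>Q\<in>?G. real (cnt (Q *v e))) \<le> real (card (PiE {0..B} (\<lambda>_. ?G))) * max 0 (2*\<alpha>*(B+1) - 1)"
        unfolding h4 by (rule h2)
      then have "real (B+1) * (\<Sum>Q\<in>?G. real (cnt (Q *v e))) \<le> real ?N ^ (B+1) * max 0 (2*\<alpha>*(B+1) - 1)"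
        unfolding h3 by simp
      then have S: "(\<Sum>Q\<in>?G. real (cnt (Q *v e))) \<le> real ?N ^ (B+1) * c"
        unfolding c_def by (simp add: field_simps)
      have "(\<Sum>Q\<in>?G. f (Q *v e)) * ennreal (1 / real ?N)
          = ennreal ((\<Sum>Q\<in>?G. real (cnt (Q *v e)) / real ?N ^ B) * (1 / real ?N))"
        by (simp add: fval ennreal_mult''[symmetric])
      also have "\<dots> \<le> ennreal c"
      proof (rule ennreal_leI)
        have "(\<Sum>Q\<in>?G. real (cnt (Q *v e)) / real ?N ^ B) * (1 / real ?N)
            = (\<Sum>Q\<in>?G. real (cnt (Q *v e))) / real ?N ^ (B+1)"
          by (simp add: sum_divide_distrib[symmetric] field_simps)
        also have "\<dots> \<le> c" using S Npos by (simp add: divide_le_eq mult.commute)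
        finally show "(\<Sum>Q\<in>?G. real (cnt (Q *v e)) / real ?N ^ B) * (1 / real ?N) \<le> c" .
      qed
      finally show ?thesis .
    qed
    have fQmeas: "(\<lambda>e. f (Q *v e)) \<in> borel_measurable ?\<mu>" for Q
      using measurable_comp[OF vmeas fmeas'] by (simp add: comp_def)
    have "integral\<^sup>N ?\<mu> f = (\<integral>\<^sup>+e. (\<Sum>Q\<in>?G. f (Q *v e)) * ennreal (1 / real ?N) \<partial>?\<mu>)"
    proof -
      have "(\<integral>\<^sup>+e. (\<Sum>Q\<in>?G. f (Q *v e)) * ennreal (1 / real ?N) \<partial>?\<mu>)
          = (\<integral>\<^sup>+e. (\<Sum>Q\<in>?G. f (Q *v e)) \<partial>?\<mu>) * ennreal (1 / real ?N)"
        by (rule nn_integral_multc) (use fQmeas in auto)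
      also have "(\<integral>\<^sup>+e. (\<Sum>Q\<in>?G. f (Q *v e)) \<partial>?\<mu>) = (\<Sum>Q\<in>?G. \<integral>\<^sup>+e. f (Q *v e) \<partial>?\<mu>)"
        by (rule nn_integral_sum) (use fQmeas in auto)
      also have "\<dots> = (\<Sum>Q\<in>?G. integral\<^sup>N ?\<mu> f)"
        using inv by simp
      also have "\<dots> = ennreal (real ?N) * integral\<^sup>N ?\<mu> f"
        by (simp add: ennreal_of_nat_eq_real_of_nat)
      finally have "(\<integral>\<^sup>+e. (\<Sum>Q\<in>?G. f (Q *v e)) * ennreal (1 / real ?N) \<partial>?\<mu>)
          = integral\<^sup>N ?\<mu> f * (ennreal (real ?N) * ennreal (1 / real ?N))"
        by (simp add: mult_ac)
      also have "ennreal (real ?N) * ennreal (1 / real ?N) = 1"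
        using Npos by (simp add: ennreal_mult[symmetric])
      finally show ?thesis by simp
    qed
    also have "\<dots> \<le> (\<integral>\<^sup>+e. ennreal c \<partial>?\<mu>)"
      by (rule nn_integral_mono) (rule bound)
    also have "\<dots> = ennreal c"
    proof -
      have "emeasure ?\<mu> UNIV = 1" using \<mu>.emeasure_space_1 by simp
      then show ?thesis by simp
    qed
    finally have "emeasure (?\<mu> \<Otimes>\<^sub>M ?\<nu>) ?S \<le> ennreal c" using em by simp
    then have "ennreal (measure (?\<mu> \<Otimes>\<^sub>M ?\<nu>) ?S) \<le> ennreal c"
      by (simp only: P.emeasure_eq_measure)
    then have "measure (?\<mu> \<Otimes>\<^sub>M ?\<nu>) ?S \<le> c"
      by (rule ennreal_le_iff[OF c0, THEN iffD1])
    then show ?thesis using c_lt by linarith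
  qed
qed

end
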